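(* Let $k\ge1$, let $U\subseteq\mathbb{R}^n$ be a domain, and let $f:U\times\mathbb{R}^n\to Cl_n$ be such that for each $x\in U$ the function $u\mapsto f(x,u)$ is a $Cl_n$-valued harmonic polynomial homogeneous of degree $k$. For $y\in\mathbb{R}^n\setminus\{0\}$ with $y^{-1}\in U$ and $w\in\mathbb{R}^n$, put $x=y^{-1}$ and $u=\frac{ywy}{\|y\|^2}$. Then $$P_{k,w}\Big[\frac{y}{\|y\|^n}f\Big(y^{-1},\frac{ywy}{\|y\|^2}\Big)\Big]=\frac{y}{\|y\|^n}\big(P_{k,u}f\big)(x,u)\Big|_{x=y^{-1},\ u=ywy/\|y\|^2}.$$
   Context: $Cl_n$ is the real Clifford algebra generated by an orthonormal basis $e_1,\dots,e_n$ of $\mathbb{R}^n\subseteq Cl_n$ with $e_ie_j+e_je_i=-2\delta_{ij}$; for a nonzero vector $y$, $y^{-1}=-y/\|y\|^2$. The Dirac operator in the variable $u$ is $D_u=\sum_{j=1}^n e_j\partial_{u_j}$. $\mathcal M_k$ denotes the space of $Cl_n$-valued polynomials $p(u)$ on $\mathbb{R}^n$, homogeneous of degree $k$, with $D_up=0$ (left monogenic). Every $Cl_n$-valued harmonic polynomial $h$ homogeneous of degree $k$ in $u$ decomposes uniquely as $h(u)=p_k(u)+u\,p_{k-1}(u)$ with $p_k\in\mathcal M_k$, $p_{k-1}\in\mathcal M_{k-1}$ (Almansi–Fischer decomposition); the projection $P_k$ is defined by $P_kh=p_k$, and explicitly $P_k=1+\frac{uD_u}{n+2k-2}$. A subscript,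 as in $P_{k,u}$, indicates the variable in which the projection acts. *)

theory Defs
  imports "HOL-Analysis.Analysis"
begin

text \<open>Real Clifford algebra Cl_n with n = CARD('n). Elements are real coefficient
vectors indexed by basis blades e_A, A a subset of the index type 'n (ordered by
the linear order of 'n). Generators satisfy e_i e_j + e_j e_i = -2 delta_ij.\<close>

type_synonym 'n cl = "real ^ ('n set)"

definition blade_sign :: "'n::{finite,linorder} set \<Rightarrow> 'n set \<Rightarrow> real" where
  "blade_sign A B = (-1) ^ (card {(a, b). a \<in> A \<and> b \<in> B \<and> b < a} + card (A \<inter> B))"

definition cl_mult :: "'n::{finite,linorder} cl \<Rightarrow> 'n cl \<Rightarrow> 'n cl" (infixl "\<odot>" 70) where
  "cl_mult a b = (\<chi> C. \<Sum>A\<in>UNIV. \<Sum>B\<in>UNIV.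
      if (A - B) \<union> (B - A) = C then blade_sign A B * (a $ A) * (b $ B) else 0)"

definition cl_e :: "'n::{finite,linorder} \<Rightarrow> 'n cl" where
  "cl_e i = axis {i} 1"

definition vec_cl :: "real ^ 'n::{finite,linorder} \<Rightarrow> 'n cl" where
  "vec_cl x = (\<Sum>i\<in>UNIV. (x $ i) *\<^sub>R cl_e i)"

definition cl_vec :: "'n::{finite,linorder} cl \<Rightarrow> real ^ ('n::{finite,linorder})" where
  "cl_vec a = (\<chi> i. a $ {i})"

definition vinv :: "real ^ 'n::{finite,linorder} \<Rightarrow> real ^ ('n::{finite,linorder})" where
  "vinv y = - (inverse (norm y ^ 2)) *\<^sub>R y"

definition pd :: "'n::{finite,linorder} \<Rightarrow> (real ^ ('n::{finite,linorder}) \<Rightarrow> 'n cl) \<Rightarrow> real ^ ('n::{finite,linorder}) \<Rightarrow> 'n cl" where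
  "pd j g u = vector_derivative (\<lambda>t. g (u + t *\<^sub>R axis j 1)) (at 0)"

definition dirac :: "(real ^ 'n::{finite,linorder} \<Rightarrow> 'n cl) \<Rightarrow> real ^ ('n::{finite,linorder}) \<Rightarrow> 'n cl" where
  "dirac g u = (\<Sum>j\<in>UNIV. cl_e j \<odot> pd j g u)"

definition hom_poly :: "nat \<Rightarrow> (real ^ 'n::{finite,linorder} \<Rightarrow> 'n cl) \<Rightarrow> bool" where
  "hom_poly k g \<longleftrightarrow> (\<exists>c :: ('n \<Rightarrow> nat) \<Rightarrow> 'n cl.
     g = (\<lambda>u. \<Sum>\<alpha>\<in>{\<alpha>. sum \<alpha> UNIV = k}. (\<Prod>i\<in>UNIV. (u $ i) ^ (\<alpha> i)) *\<^sub>R c \<alpha>))"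

definition harmonic_hom_poly :: "nat \<Rightarrow> (real ^ 'n::{finite,linorder} \<Rightarrow> 'n cl) \<Rightarrow> bool" where
  "harmonic_hom_poly k g \<longleftrightarrow> hom_poly k g \<and> (\<forall>u. (\<Sum>j\<in>UNIV. pd j (pd j g) u) = 0)"

definition Pk :: "nat \<Rightarrow> (real ^ 'n::{finite,linorder} \<Rightarrow> 'n cl) \<Rightarrow> real ^ ('n::{finite,linorder}) \<Rightarrow> 'n cl" where
  "Pk k g u = g u + inverse (real CARD('n) + 2 * real k - 2) *\<^sub>R (vec_cl u \<odot> dirac g u)"

end

theory Submission
  imports Defs
begin

lemma cl_mult_nth: "(a \<odot> b) $ C = (\<Sum>A\<in>UNIV. \<Sum>B\<in>UNIV.
      if (A - B) \<union> (B - A) = C then blade_sign A B * (a $ A) * (b $ B) else 0)"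
  by (simp add: cl_mult_def)

lemma cl_add_left: "(a + b) \<odot> c = a \<odot> c + b \<odot> c"
proof -
  have *: "(if P then s*(x+y)*z else 0) = (if P then s*x*z else 0) + (if P then s*y*z else 0)" for P and s x y z :: real by (simp add: algebra_simps)
  show ?thesis unfolding vec_eq_iff cl_mult_nth vector_add_component * sum.distrib by simp
qed

lemma cl_add_right: "c \<odot> (a + b) = c \<odot> a + c \<odot> b"
proof -
  have *: "(if P then s*z*(x+y) else 0) = (if P then s*z*x else 0) + (if P then s*z*y else 0)" for P and s x y z :: real by (simp add: algebra_simps)
  show ?thesis unfolding vec_eq_iff cl_mult_nth vector_add_component * sum.distrib by simp
qed

lemma cl_scale_left: "(r *\<^sub>R a) \<odot> c = r *\<^sub>R (a \<odot> c)"
proof -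
  have *: "(if P then s*(r*x)*z else 0) = r * (if P then s*x*z else 0)" for P and s x r z :: real by (simp add: algebra_simps)
  show ?thesis unfolding vec_eq_iff cl_mult_nth vector_scaleR_component real_scaleR_def * sum_distrib_left by (intro allI refl)
qed

lemma cl_scale_right: "c \<odot> (r *\<^sub>R a) = r *\<^sub>R (c \<odot> a)"
proof -
  have *: "(if P then s*z*(r*x) else 0) = r * (if P then s*z*x else 0)" for P and s x r z :: real by (simp add: algebra_simps)
  show ?thesis unfolding vec_eq_iff cl_mult_nth vector_scaleR_component real_scaleR_def * sum_distrib_left by (intro allI refl)
qed

lemma cl_zero_left: "0 \<odot> c = 0" by (metis cl_scale_left scaleR_zero_left)
lemma cl_zero_right: "c \<odot> 0 = 0" by (metis cl_scale_right scaleR_zero_left)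
lemma cl_neg_left: "(- a) \<odot> c = - (a \<odot> c)" by (metis cl_scale_left scaleR_minus1_left)
lemma cl_neg_right: "c \<odot> (- a) = - (c \<odot> a)" by (metis cl_scale_right scaleR_minus1_left)
lemma cl_diff_left: "(a - b) \<odot> c = a \<odot> c - b \<odot> c"
  by (metis cl_add_left cl_neg_left diff_conv_add_uminus)
lemma cl_diff_right: "c \<odot> (a - b) = c \<odot> a - c \<odot> b"
  by (metis cl_add_right cl_neg_right diff_conv_add_uminus)
lemma cl_sum_left: "(\<Sum>i\<in>I. a i) \<odot> c = (\<Sum>i\<in>I. a i \<odot> c)"
  by (induct I rule: infinite_finite_induct) (simp_all add: cl_zero_left cl_add_left)
lemma cl_sum_right: "c \<odot> (\<Sum>i\<in>I. a i) = (\<Sum>i\<in>I. c \<odot> a i)"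
  by (induct I rule: infinite_finite_induct) (simp_all add: cl_zero_right cl_add_right)

lemma cl_linear_right: "linear (\<lambda>x. c \<odot> x)"
  by (rule linearI) (simp_all add: cl_add_right cl_scale_right)

lemmas cl_lin = cl_add_left cl_add_right cl_scale_left cl_scale_right cl_zero_left cl_zero_right
  cl_neg_left cl_neg_right cl_diff_left cl_diff_right cl_sum_left cl_sum_right

lemma cl_axis_mult: "axis A a \<odot> axis B b = axis ((A - B) \<union> (B - A)) (blade_sign A B * a * b)"
proof -
  define v where "v C = (if (A - B) \<union> (B - A) = C then blade_sign A B * a * b else 0)" for C
  have inner: "(\<Sum>B'\<in>UNIV. if (A' - B') \<union> (B' - A') = C then blade_sign A' B' * (axis A a $ A') * (axis B b $ B') else 0)
     = (if A' = A then v C else 0)" for A' C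
  proof (cases "A' = A")
    case True
    have "(\<Sum>B'\<in>UNIV. if (A' - B') \<union> (B' - A') = C then blade_sign A' B' * (axis A a $ A') * (axis B b $ B') else 0)
       = (\<Sum>B'\<in>UNIV. if B' = B then v C else 0)"
    proof (intro sum.cong refl)
      fix B' show "(if (A' - B') \<union> (B' - A') = C then blade_sign A' B' * (axis A a $ A') * (axis B b $ B') else 0)
         = (if B' = B then v C else 0)"
        using True by (cases "B' = B") (simp_all add: axis_def v_def)
    qed
    then show ?thesis using True by simp
  next
    case False
    then have "axis A a $ A' = 0" by (simp add: axis_def)
    then show ?thesis using False by (simp only: mult_zero_right mult_zero_left if_cancel sum.neutral_const if_False)
  qed
  have "(axis A a \<odot> axis B b) $ C = v C" for C
    unfolding cl_mult_nth inner by simp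
  then show ?thesis by (simp add: vec_eq_iff axis_def v_def eq_commute)
qed

lemma cl_expand: "x = (\<Sum>A\<in>UNIV. (x $ A) *\<^sub>R axis A (1::real))"
proof -
  have "(\<Sum>A\<in>UNIV. (x $ A) *\<^sub>R axis A (1::real)) $ C = x $ C" for C
  proof -
    have "(\<Sum>A\<in>UNIV. (x $ A) *\<^sub>R axis A (1::real)) $ C = (\<Sum>A\<in>UNIV. if A = C then x $ A else 0)"
      unfolding sum_component by (intro sum.cong refl) (simp add: axis_def)
    then show ?thesis by simp
  qed
  then show ?thesis by (simp add: vec_eq_iff)
qed
definition rho :: "'n::linorder \<Rightarrow> 'n \<Rightarrow> real" where "rho a b = (if b \<le> a then -1 else 1)"

lemma blade_sign_prod:
  fixes A B :: "'n::{finite,linorder} set"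
  shows "blade_sign A B = (\<Prod>a\<in>A. \<Prod>b\<in>B. rho a b)"
proof -
  define P1 where "P1 = {(a, b). a \<in> A \<and> b \<in> B \<and> b < a}"
  define P2 where "P2 = {(a, b). a \<in> A \<and> b \<in> B \<and> b \<le> a}"
  define I where "I = (\<lambda>a. (a,a)) ` (A \<inter> B)"
  have fin: "finite (A \<times> B)" by simp
  have u: "P2 = P1 \<union> I" unfolding P1_def P2_def I_def by auto
  have d: "P1 \<inter> I = {}" unfolding P1_def I_def by auto
  have ci: "card I = card (A \<inter> B)" unfolding I_def by (rule card_image) (auto simp: inj_on_def)
  have f1: "finite P1" by simp
  have f2: "finite I" by simp
  have c: "card P2 = card P1 + card (A \<inter> B)"
    unfolding u using card_Un_disjoint[OF f1 f2 d] ci by simp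
  have "(\<Prod>a\<in>A. \<Prod>b\<in>B. rho a b) = (\<Prod>p\<in>A \<times> B. if snd p \<le> fst p then -1 else 1)"
    unfolding prod.cartesian_product rho_def by (simp add: case_prod_beta)
  also have "\<dots> = (\<Prod>p\<in>(A \<times> B) \<inter> {p. snd p \<le> fst p}. -1) * (\<Prod>p\<in>(A \<times> B) \<inter> - {p. snd p \<le> fst p}. 1)"
    by (rule prod.If_cases[OF fin])
  also have "(A \<times> B) \<inter> {p. snd p \<le> fst p} = P2" unfolding P2_def by auto
  also have "(\<Prod>p\<in>P2. (-1::real)) * (\<Prod>p\<in>(A \<times> B) \<inter> - {p. snd p \<le> fst p}. 1) = (-1) ^ card P2"
    by (simp only: prod.neutral_const prod_constant mult_1_right)
  finally have pr: "(\<Prod>a\<in>A. \<Prod>b\<in>B. rho a b) = (-1) ^ card P2" .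
  have bs: "blade_sign A B = (-1) ^ (card P1 + card (A \<inter> B))" unfolding blade_sign_def P1_def by (rule refl)
  show ?thesis by (simp only: bs c pr)
qed
lemma prod_symdiff:
  fixes f :: "'a \<Rightarrow> real"
  assumes "finite X" "finite Y" "\<And>x. f x * f x = 1"
  shows "(\<Prod>x\<in>(X - Y) \<union> (Y - X). f x) = (\<Prod>x\<in>X. f x) * (\<Prod>x\<in>Y. f x)"
proof -
  have X: "(\<Prod>x\<in>X. f x) = (\<Prod>x\<in>X - Y. f x) * (\<Prod>x\<in>X \<inter> Y. f x)"
    using prod.union_disjoint[of "X-Y" "X \<inter> Y" f] assms by (auto simp: Un_Diff_Int)
  have Y: "(\<Prod>x\<in>Y. f x) = (\<Prod>x\<in>Y - X. f x) * (\<Prod>x\<in>X \<inter> Y. f x)"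
  proof -
    have e: "(Y - X) \<union> (X \<inter> Y) = Y" "(Y - X) \<inter> (X \<inter> Y) = {}" by auto
    show ?thesis using prod.union_disjoint[of "Y-X" "X \<inter> Y" f] assms e by simp
  qed
  have sq: "(\<Prod>x\<in>X \<inter> Y. f x) * (\<Prod>x\<in>X \<inter> Y. f x) = 1"
    by (simp add: assms(3) flip: prod.distrib)
  have "(\<Prod>x\<in>(X - Y) \<union> (Y - X). f x) = (\<Prod>x\<in>X - Y. f x) * (\<Prod>x\<in>Y - X. f x)"
    using assms by (intro prod.union_disjoint) auto
  also have "\<dots> = (\<Prod>x\<in>X - Y. f x) * (\<Prod>x\<in>Y - X. f x) * ((\<Prod>x\<in>X \<inter> Y. f x) * (\<Prod>x\<in>X \<inter> Y. f x))"
    by (simp add: sq)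
  also have "\<dots> = (\<Prod>x\<in>X. f x) * (\<Prod>x\<in>Y. f x)" unfolding X Y by (simp add: algebra_simps)
  finally show ?thesis .
qed

lemma rho_sq: "rho a b * rho a b = 1" by (simp add: rho_def)

lemma prod_rho_sq: "(\<Prod>b\<in>B. rho a b) * (\<Prod>b\<in>B. rho a b) = 1"
  by (simp add: rho_sq flip: prod.distrib)
lemma prod_rho_sq': "(\<Prod>a\<in>A. rho a b) * (\<Prod>a\<in>A. rho a b) = 1"
  by (simp add: rho_sq flip: prod.distrib)

lemma bs_right: fixes A B C :: "'n::{finite,linorder} set"
  shows "blade_sign A ((B - C) \<union> (C - B)) = blade_sign A B * blade_sign A C"
  unfolding blade_sign_prod
  by (simp add: prod_symdiff[OF finite finite] rho_sq prod.distrib)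

lemma bs_left: fixes A B C :: "'n::{finite,linorder} set"
  shows "blade_sign ((A - B) \<union> (B - A)) C = blade_sign A C * blade_sign B C"
  unfolding blade_sign_prod
  by (subst (1 2 3) prod.swap) (simp add: prod_symdiff[OF finite finite] rho_sq prod.distrib)

lemma bs_assoc: fixes A B C :: "'n::{finite,linorder} set"
  shows "blade_sign A B * blade_sign ((A - B) \<union> (B - A)) C = blade_sign B C * blade_sign A ((B - C) \<union> (C - B))"
  by (simp add: bs_left bs_right)


lemma cl_axis_assoc: "(axis A (1::real) \<odot> axis B 1) \<odot> axis C 1 = axis A 1 \<odot> (axis B 1 \<odot> axis C 1)"
proof -
  have e: "(A - B \<union> (B - A)) - C \<union> (C - (A - B \<union> (B - A))) = A - (B - C \<union> (C - B)) \<union> ((B - C \<union> (C - B)) - A)" by auto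
  have l: "(axis A (1::real) \<odot> axis B 1) \<odot> axis C 1 = axis ((A - B \<union> (B - A)) - C \<union> (C - (A - B \<union> (B - A)))) (blade_sign A B * blade_sign ((A - B) \<union> (B - A)) C)"
    by (simp add: cl_axis_mult mult.commute)
  have r: "axis A (1::real) \<odot> (axis B 1 \<odot> axis C 1) = axis (A - (B - C \<union> (C - B)) \<union> ((B - C \<union> (C - B)) - A)) (blade_sign B C * blade_sign A ((B - C) \<union> (C - B)))"
    by (simp add: cl_axis_mult mult.commute)
  show ?thesis unfolding l r e using bs_assoc[of A B C] by simp
qed

lemma assoc_exp: "((\<Sum>A\<in>UNIV. a A *\<^sub>R axis A (1::real)) \<odot> (\<Sum>B\<in>UNIV. b B *\<^sub>R axis B 1)) \<odot> (\<Sum>C\<in>UNIV. c C *\<^sub>R axis C 1)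
  = (\<Sum>A\<in>UNIV. a A *\<^sub>R axis A 1) \<odot> ((\<Sum>B\<in>UNIV. b B *\<^sub>R axis B 1) \<odot> (\<Sum>C\<in>UNIV. c C *\<^sub>R axis C 1))"
  by (simp add: cl_sum_left cl_sum_right cl_scale_left cl_scale_right cl_axis_assoc)

lemma cl_assoc: "(x \<odot> y) \<odot> z = x \<odot> (y \<odot> z)"
  using assoc_exp[of "($) x" "($) y" "($) z"] by (simp flip: cl_expand)

definition cl_one :: "'n::{finite,linorder} cl" where "cl_one = axis {} 1"

lemma cl_one_left: "cl_one \<odot> x = x"
proof -
  have "cl_one \<odot> (\<Sum>A\<in>UNIV. (x $ A) *\<^sub>R axis A (1::real)) = (\<Sum>A\<in>UNIV. (x $ A) *\<^sub>R axis A (1::real))"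
    by (simp add: cl_one_def cl_sum_right cl_scale_right cl_axis_mult blade_sign_prod)
  then show ?thesis by (simp flip: cl_expand)
qed

lemma cl_one_right: "x \<odot> cl_one = x"
proof -
  have "(\<Sum>A\<in>UNIV. (x $ A) *\<^sub>R axis A (1::real)) \<odot> cl_one = (\<Sum>A\<in>UNIV. (x $ A) *\<^sub>R axis A (1::real))"
    by (simp add: cl_one_def cl_sum_left cl_scale_left cl_axis_mult blade_sign_prod)
  then show ?thesis by (simp flip: cl_expand)
qed

lemma axis_add_same: "axis X (a::real) + axis X b = axis X (a + b)"
  by (auto simp: vec_eq_iff axis_def)

lemma axis_scale: "r *\<^sub>R axis X (1::real) = axis X r"
  by (auto simp: vec_eq_iff axis_def)

lemma cl_e_anti: "cl_e i \<odot> cl_e j + cl_e j \<odot> cl_e i = (if i = j then -2 else 0) *\<^sub>R cl_one"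
proof (cases "i = j")
  case True
  then show ?thesis by (simp add: cl_e_def cl_axis_mult blade_sign_prod rho_def cl_one_def axis_add_same
     axis_scale)
next
  case False
  have s: "{i} - {j} \<union> ({j} - {i}) = {j} - {i} \<union> ({i} - {j})" by auto
  have "rho i j + rho j i = 0" using False by (auto simp: rho_def)
  then show ?thesis using False unfolding cl_e_def cl_axis_mult s axis_add_same
    by (simp add: blade_sign_prod)
qed

lemma vec_cl_axis: "vec_cl (axis j 1) = cl_e j"
proof -
  have "(\<Sum>i\<in>UNIV. axis j (1::real) $ i *\<^sub>R cl_e i) = (\<Sum>i\<in>UNIV. if i = j then cl_e i else 0)"
    by (intro sum.cong) (auto simp: axis_def)
  then show ?thesis unfolding vec_cl_def by simp
qed

lemma vec_cl_mult: "vec_cl a \<odot> vec_cl b = (\<Sum>i\<in>UNIV. \<Sum>j\<in>UNIV. (a$i * b$j) *\<^sub>R (cl_e i \<odot> cl_e j))"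
  unfolding vec_cl_def
  by (simp only: cl_sum_left) (simp only: cl_sum_right cl_scale_left cl_scale_right scaleR_scaleR, intro sum.cong refl, simp add: mult.commute)

lemma vec_cl_add: "vec_cl (a + b) = vec_cl a + vec_cl b"
  by (simp add: vec_cl_def scaleR_add_left sum.distrib)
lemma vec_cl_scale: "vec_cl (r *\<^sub>R a) = r *\<^sub>R vec_cl a"
  by (simp add: vec_cl_def scaleR_sum_right)
lemma vec_cl_diff: "vec_cl (a - b) = vec_cl a - vec_cl b"
  by (simp add: vec_cl_def scaleR_diff_left sum_subtractf)

lemma vec_cl_anti: "vec_cl a \<odot> vec_cl b + vec_cl b \<odot> vec_cl a = (-2 * inner a b) *\<^sub>R cl_one"
proof -
  have "vec_cl a \<odot> vec_cl b + vec_cl b \<odot> vec_cl a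
     = (\<Sum>i\<in>UNIV. \<Sum>j\<in>UNIV. (a$i * b$j) *\<^sub>R (cl_e i \<odot> cl_e j)) + (\<Sum>i\<in>UNIV. \<Sum>j\<in>UNIV. (b$i * a$j) *\<^sub>R (cl_e i \<odot> cl_e j))"
    by (simp only: vec_cl_mult)
  also have "(\<Sum>i\<in>UNIV. \<Sum>j\<in>UNIV. (b$i * a$j) *\<^sub>R (cl_e i \<odot> cl_e j)) = (\<Sum>i\<in>UNIV. \<Sum>j\<in>UNIV. (a$i * b$j) *\<^sub>R (cl_e j \<odot> cl_e i))"
    by (subst sum.swap) (simp add: mult.commute)
  also have "(\<Sum>i\<in>UNIV. \<Sum>j\<in>UNIV. (a$i * b$j) *\<^sub>R (cl_e i \<odot> cl_e j)) + \<dots>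
      = (\<Sum>i\<in>UNIV. \<Sum>j\<in>UNIV. (a$i * b$j) *\<^sub>R (cl_e i \<odot> cl_e j + cl_e j \<odot> cl_e i))"
    by (simp add: sum.distrib scaleR_add_right)
  also have "\<dots> = (\<Sum>i\<in>UNIV. \<Sum>j\<in>UNIV. (if i = j then -2 * (a$i * b$j) else 0) *\<^sub>R cl_one)"
    unfolding cl_e_anti by (intro sum.cong refl) simp
  also have "\<dots> = (\<Sum>i\<in>UNIV. (-2 * (a$i * b$i)) *\<^sub>R cl_one)"
    by (simp add: if_distrib[where f="\<lambda>x. x *\<^sub>R cl_one"] cong: if_cong)
  also have "\<dots> = (-2 * inner a b) *\<^sub>R cl_one"
    by (simp add: inner_vec_def scaleR_sum_left sum_distrib_left)
  finally show ?thesis .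
qed

lemma vec_cl_sq: "vec_cl a \<odot> vec_cl a = (- (norm a ^ 2)) *\<^sub>R cl_one"
proof -
  have "(2::real) *\<^sub>R (vec_cl a \<odot> vec_cl a) = 2 *\<^sub>R ((- (norm a ^ 2)) *\<^sub>R cl_one)"
    using vec_cl_anti[of a a] by (simp add: power2_norm_eq_inner scaleR_2)
  then show ?thesis by (subst (asm) scaleR_cancel_left) simp
qed

lemma cl_vec_vec_cl: "cl_vec (vec_cl z) = z"
  unfolding cl_vec_def vec_cl_def cl_e_def
  by (simp add: vec_eq_iff sum_component axis_def if_distrib cong: if_cong)

lemma cl_vec_one: "cl_vec (cl_one :: 'n::{finite,linorder} cl) = 0"
  by (simp add: cl_vec_def cl_one_def vec_eq_iff axis_def)

lemma cl_vec_add: "cl_vec (a + b) = cl_vec a + cl_vec b" by (simp add: cl_vec_def vec_eq_iff)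
lemma cl_vec_scale: "cl_vec (r *\<^sub>R a) = r *\<^sub>R cl_vec a" by (simp add: cl_vec_def vec_eq_iff)
lemma cl_vec_diff: "cl_vec (a - b) = cl_vec a - cl_vec b" by (simp add: cl_vec_def vec_eq_iff)



definition reflv :: "real ^ 'n::{finite,linorder} \<Rightarrow> real ^ ('n::{finite,linorder}) \<Rightarrow> real ^ ('n::{finite,linorder})" where
  "reflv (y::real ^ 'n::{finite,linorder}) z = z - (2 * inner z y / norm y ^ 2) *\<^sub>R y"

lemma refl_vec:
  fixes y w :: "real ^ 'n::{finite,linorder}"
  assumes "y \<noteq> 0"
  shows "cl_vec (inverse (norm y ^ 2) *\<^sub>R (vec_cl y \<odot> vec_cl w \<odot> vec_cl y)) = reflv y w"
proof -
  have a: "vec_cl y \<odot> vec_cl w = (-2 * inner y w) *\<^sub>R cl_one - vec_cl w \<odot> vec_cl y"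
    using vec_cl_anti[of y w] by (simp add: eq_diff_eq)
  have b: "vec_cl y \<odot> vec_cl w \<odot> vec_cl y = (norm y ^ 2) *\<^sub>R vec_cl w - (2 * inner y w) *\<^sub>R vec_cl y"
    unfolding a cl_diff_left cl_scale_left cl_one_left cl_assoc vec_cl_sq cl_scale_right cl_one_right
    by (simp add: algebra_simps)
  have n: "norm y ^ 2 \<noteq> 0" using assms by simp
  show ?thesis unfolding b reflv_def
    using n by (simp add: cl_vec_scale cl_vec_diff cl_vec_vec_cl inner_commute scaleR_diff_right divide_inverse mult.commute)
qed

lemma vec_identity1:
  fixes y z :: "real ^ 'n::{finite,linorder}"
  assumes "y \<noteq> 0"
  shows "vec_cl (reflv y z) \<odot> vec_cl y = - (vec_cl y \<odot> vec_cl z)"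
proof -
  have n: "norm y ^ 2 \<noteq> 0" using assms by simp
  have a: "vec_cl y \<odot> vec_cl z = (-2 * inner z y) *\<^sub>R cl_one - vec_cl z \<odot> vec_cl y"
    using vec_cl_anti[of y z] by (simp add: eq_diff_eq inner_commute)
  show ?thesis unfolding reflv_def vec_cl_diff vec_cl_scale cl_diff_left cl_scale_left vec_cl_sq a
    using n by (simp add: algebra_simps)
qed

lemma vec_identity2:
  fixes y z :: "real ^ 'n::{finite,linorder}"
  assumes "y \<noteq> 0"
  shows "vec_cl y \<odot> vec_cl (reflv y z) = - (vec_cl z \<odot> vec_cl y)"
proof -
  have n: "norm y ^ 2 \<noteq> 0" using assms by simp
  have a: "vec_cl z \<odot> vec_cl y = (-2 * inner z y) *\<^sub>R cl_one - vec_cl y \<odot> vec_cl z"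
    using vec_cl_anti[of z y] by (simp add: eq_diff_eq inner_commute)
  show ?thesis unfolding reflv_def vec_cl_diff vec_cl_scale cl_diff_right cl_scale_right vec_cl_sq a
    using n by (simp add: algebra_simps)
qed

lemma reflv_linear: "bounded_linear (reflv y)"
proof -
  have e: "(\<lambda>x. 2 * (x \<bullet> y) / (norm y)\<^sup>2) = (\<lambda>x. inner x ((2 / (norm y)\<^sup>2) *\<^sub>R y))"
    by (simp add: fun_eq_iff)
  have "bounded_linear (\<lambda>x. 2 * (x \<bullet> y) / (norm y)\<^sup>2)" unfolding e by (rule bounded_linear_inner_left)
  then show ?thesis unfolding reflv_def by (intro bounded_linear_intros)
qed
lemma cl_left_bl: "bounded_linear (\<lambda>x. c \<odot> x)"
  using cl_linear_right by (simp add: linear_conv_bounded_linear)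

lemma pd_of_deriv:
  assumes "(g has_derivative L) (at u)"
  shows "pd j g u = L (axis j 1)"
proof -
  have lin: "linear L" using assms has_derivative_linear by blast
  have d1: "((\<lambda>t::real. u + t *\<^sub>R axis j 1) has_derivative (\<lambda>t. t *\<^sub>R axis j 1)) (at 0)"
    by (auto intro!: derivative_eq_intros)
  have d2: "(g has_derivative L) (at ((\<lambda>t::real. u + t *\<^sub>R axis j 1) 0))" using assms by simp
  have "((g \<circ> (\<lambda>t::real. u + t *\<^sub>R axis j 1)) has_derivative (L \<circ> (\<lambda>t. t *\<^sub>R axis j 1))) (at 0)"
    by (rule diff_chain_at[OF d1 d2])
  then have "((\<lambda>t. g (u + t *\<^sub>R axis j 1)) has_vector_derivative L (axis j 1)) (at 0)"
    unfolding has_vector_derivative_def o_def using linear_scale[OF lin] by simp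
  then show ?thesis unfolding pd_def by (rule vector_derivative_at)
qed

lemma hom_poly_deriv:
  fixes g :: "real ^ 'n::{finite,linorder} \<Rightarrow> 'n cl"
  assumes "hom_poly k g"
  shows "\<exists>L. (g has_derivative L) (at u)"
proof -
  obtain c where g: "g = (\<lambda>u. \<Sum>\<alpha>\<in>{\<alpha>. sum \<alpha> UNIV = k}. (\<Prod>i\<in>UNIV. (u $ i) ^ (\<alpha> i)) *\<^sub>R c \<alpha>)"
    using assms unfolding hom_poly_def by blast
  have comp: "(\<lambda>v. v$i ^ m) differentiable (at u)" for i m
    by (intro differentiable_power bounded_linear_imp_differentiable bounded_linear_vec_nth)
  have prodd: "(\<lambda>v. \<Prod>i\<in>UNIV. (v$i)^(\<alpha> i)) differentiable (at u)" for \<alpha> :: "'n \<Rightarrow> nat"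
  proof -
    from comp have "\<forall>i. \<exists>D. ((\<lambda>v. v$i ^ \<alpha> i) has_derivative D) (at u)"
      unfolding differentiable_def by blast
    from choice[OF this] obtain D where Di: "\<forall>i. ((\<lambda>v. v$i ^ \<alpha> i) has_derivative D i) (at u)" by blast
    show ?thesis unfolding differentiable_def
      by (rule exI, rule has_derivative_prod[where f="\<lambda>i v. v$i ^ \<alpha> i"], rule Di[rule_format])
  qed
  have trm: "(\<lambda>v. (\<Prod>i\<in>UNIV. (v$i)^(\<alpha> i)) *\<^sub>R c \<alpha>) differentiable (at u)" for \<alpha>
    by (intro differentiable_scaleR prodd differentiable_const)
  then have "\<forall>\<alpha>. \<exists>D. ((\<lambda>v. (\<Prod>i\<in>UNIV. (v$i)^(\<alpha> i)) *\<^sub>R c \<alpha>) has_derivative D) (at u)"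
    unfolding differentiable_def by blast
  from choice[OF this] obtain D where D: "\<forall>\<alpha>. ((\<lambda>v. (\<Prod>i\<in>UNIV. (v$i)^(\<alpha> i)) *\<^sub>R c \<alpha>) has_derivative D \<alpha>) (at u)" by blast
  show ?thesis unfolding g by (rule exI, rule has_derivative_sum, rule D[rule_format])
qed

lemma vec_expand: "(y::real^'n) = (\<Sum>j\<in>UNIV. (y $ j) *\<^sub>R axis j 1)"
proof -
  have "(\<Sum>j\<in>UNIV. (y $ j) *\<^sub>R axis j (1::real)) $ i = y $ i" for i
  proof -
    have "(\<Sum>j\<in>UNIV. (y $ j) *\<^sub>R axis j (1::real)) $ i = (\<Sum>j\<in>UNIV. if j = i then y $ j else 0)"
      unfolding sum_component by (intro sum.cong refl) (simp add: axis_def)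
    then show ?thesis by simp
  qed
  then show ?thesis by (simp add: vec_eq_iff)
qed



theorem lemma2:
  fixes U :: "(real ^ 'n::{finite,linorder}) set"
    and f :: "real ^ ('n::{finite,linorder}) \<Rightarrow> real ^ ('n::{finite,linorder}) \<Rightarrow> 'n cl"
    and k :: nat
  assumes "k \<ge> 1"
    and "open U" and "connected U" and "U \<noteq> {}"
    and "\<forall>x\<in>U. harmonic_hom_poly k (f x)"
    and "y \<noteq> 0" and "vinv y \<in> U"
  shows "Pk k (\<lambda>w'. vec_cl (inverse (norm y ^ CARD('n)) *\<^sub>R y) \<odot>
              f (vinv y) (cl_vec (inverse (norm y ^ 2) *\<^sub>R (vec_cl y \<odot> vec_cl w' \<odot> vec_cl y)))) w
       = vec_cl (inverse (norm y ^ CARD('n)) *\<^sub>R y) \<odot>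
           Pk k (f (vinv y)) (cl_vec (inverse (norm y ^ 2) *\<^sub>R (vec_cl y \<odot> vec_cl w \<odot> vec_cl y)))"
proof -
  define g where "g = f (vinv y)"
  have hp: "hom_poly k g" using assms(5) assms(7) unfolding g_def harmonic_hom_poly_def by blast
  define A where "A = reflv y"
  have Aeq: "\<And>w'. cl_vec (inverse (norm y ^ 2) *\<^sub>R (vec_cl y \<odot> vec_cl w' \<odot> vec_cl y)) = A w'"
    unfolding A_def by (rule refl_vec[OF assms(6)])
  define \<alpha> where "\<alpha> = inverse (norm y ^ CARD('n))"
  define c where "c = vec_cl (\<alpha> *\<^sub>R y)"
  have c_eq: "c = \<alpha> *\<^sub>R vec_cl y" unfolding c_def by (rule vec_cl_scale)
  define h where "h = (\<lambda>w'. c \<odot> g (A w'))"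
  have lhs: "(\<lambda>w'. vec_cl (inverse (norm y ^ CARD('n)) *\<^sub>R y) \<odot>
              f (vinv y) (cl_vec (inverse (norm y ^ 2) *\<^sub>R (vec_cl y \<odot> vec_cl w' \<odot> vec_cl y)))) = h"
    unfolding h_def Aeq c_def \<alpha>_def g_def by (rule refl)
  obtain L where L: "(g has_derivative L) (at (A w))" using hom_poly_deriv[OF hp] by blast
  have linL: "linear L" using L has_derivative_linear by blast
  have blA: "bounded_linear A" unfolding A_def by (rule reflv_linear)
  have hd: "(h has_derivative (\<lambda>z. c \<odot> L (A z))) (at w)"
  proof -
    have dA: "(A has_derivative A) (at w)" by (rule bounded_linear_imp_has_derivative[OF blA])
    have "((g \<circ> A) has_derivative (L \<circ> A)) (at w)" by (rule diff_chain_at[OF dA L])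
    then have "((\<lambda>z. g (A z)) has_derivative (\<lambda>z. L (A z))) (at w)" by (simp add: o_def)
    from bounded_linear.has_derivative[OF cl_left_bl this] show ?thesis unfolding h_def .
  qed
  have pdh: "pd j h w = c \<odot> L (A (axis j 1))" for j using pd_of_deriv[OF hd] .
  have pdg: "pd j g (A w) = L (axis j 1)" for j using pd_of_deriv[OF L] .
  define D where "D = (\<Sum>i\<in>UNIV. cl_e i \<odot> L (axis i 1))"
  have dg: "dirac g (A w) = D" unfolding dirac_def D_def pdg by (rule refl)
  have LA: "L (A z) = (\<Sum>i\<in>UNIV. (A z $ i) *\<^sub>R L (axis i 1))" for z
  proof -
    have "L (A z) = L (\<Sum>i\<in>UNIV. (A z $ i) *\<^sub>R axis i 1)" by (rule arg_cong[OF vec_expand])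
    also have "\<dots> = (\<Sum>i\<in>UNIV. (A z $ i) *\<^sub>R L (axis i 1))"
      by (simp only: linear_sum[OF linL] linear_scale[OF linL])
    finally show ?thesis .
  qed
  have Asym: "A (axis j 1) $ i = A (axis i 1) $ j" for i j
  proof -
    have ia: "inner (axis l (1::real)) y = y $ l" for l by (simp add: inner_axis')
    show ?thesis unfolding A_def reflv_def vector_minus_component vector_scaleR_component ia
      by (cases "i = j") (simp_all add: axis_def)
  qed
  have ident: "vec_cl (A z) \<odot> c = - (c \<odot> vec_cl z)" for z
    unfolding c_eq cl_scale_right cl_scale_left A_def vec_identity1[OF assms(6)] by simp
  have dh: "dirac h w = - (c \<odot> D)"
  proof -
    have "dirac h w = (\<Sum>j\<in>UNIV. cl_e j \<odot> (c \<odot> L (A (axis j 1))))" unfolding dirac_def pdh by (rule refl)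
    also have "\<dots> = (\<Sum>j\<in>UNIV. \<Sum>i\<in>UNIV. (A (axis j 1) $ i) *\<^sub>R (cl_e j \<odot> (c \<odot> L (axis i 1))))"
      by (simp only: LA cl_sum_right cl_scale_right)
    also have "\<dots> = (\<Sum>i\<in>UNIV. \<Sum>j\<in>UNIV. (A (axis i 1) $ j) *\<^sub>R (cl_e j \<odot> (c \<odot> L (axis i 1))))"
      by (subst sum.swap, intro sum.cong refl, subst Asym, rule refl)
    also have "\<dots> = (\<Sum>i\<in>UNIV. vec_cl (A (axis i 1)) \<odot> (c \<odot> L (axis i 1)))"
      by (simp only: vec_cl_def cl_sum_left cl_scale_left)
    also have "\<dots> = (\<Sum>i\<in>UNIV. - ((c \<odot> cl_e i) \<odot> L (axis i 1)))"
      by (simp only: cl_assoc[symmetric] ident vec_cl_axis cl_neg_left)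
    also have "\<dots> = - (c \<odot> D)"
      by (simp only: D_def cl_sum_right cl_assoc sum_negf)
    finally show ?thesis .
  qed
  have vid: "vec_cl w \<odot> c = - (c \<odot> vec_cl (A w))"
    unfolding c_eq cl_scale_right cl_scale_left A_def vec_identity2[OF assms(6)] by simp
  have e1: "vec_cl w \<odot> dirac h w = c \<odot> (vec_cl (A w) \<odot> D)"
    by (simp only: dh cl_neg_right cl_assoc[symmetric] vid cl_neg_left minus_minus)
  have m1: "Pk k h w = h w + inverse (real CARD('n) + 2 * real k - 2) *\<^sub>R (c \<odot> (vec_cl (A w) \<odot> D))"
    unfolding Pk_def e1 by (rule refl)
  have m2: "c \<odot> Pk k g (A w) = c \<odot> g (A w) + inverse (real CARD('n) + 2 * real k - 2) *\<^sub>R (c \<odot> (vec_cl (A w) \<odot> D))"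
    unfolding Pk_def dg cl_add_right cl_scale_right by (rule refl)
  have main: "Pk k h w = c \<odot> Pk k g (A w)" unfolding m1 m2 by (simp add: h_def)
  show ?thesis unfolding Aeq using main unfolding h_def c_def \<alpha>_def g_def .
qed

end
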